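(* For all $n\ge 2$, $|F_n(321,2134)|=n^2-3n+4$.
   Context: A permutation $\pi$ avoids a classical pattern $p\in S_k$ if no subsequence of $\pi$ of length $k$ is order-isomorphic to $p$. A Fishburn permutation is a permutation $\pi=\pi_1\cdots\pi_n$ of $[n]$ for which there are no indices $i<j$ with $\pi_j<\pi_i<\pi_{i+1}$ and $\pi_i=\pi_j+1$. $F_n(\sigma_1,\dots,\sigma_k)$ denotes the set of Fishburn permutations of length $n$ avoiding each of the classical patterns $\sigma_1,\dots,\sigma_k$. *)

theory Defs
  imports Main
begin

definition perm_of :: "nat \<Rightarrow> nat list \<Rightarrow> bool" where
  "perm_of n \<pi> \<longleftrightarrow> distinct \<pi> \<and> set \<pi> = {1..n}"

definition contains :: "nat list \<Rightarrow> nat list \<Rightarrow> bool" where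
  "contains \<pi> p \<longleftrightarrow> (\<exists>f. (\<forall>i j. i < j \<and> j < length p \<longrightarrow> f i < f j)
      \<and> (\<forall>i < length p. f i < length \<pi>)
      \<and> (\<forall>i < length p. \<forall>j < length p. (\<pi> ! f i < \<pi> ! f j) \<longleftrightarrow> (p ! i < p ! j)))"

definition avoids :: "nat list \<Rightarrow> nat list \<Rightarrow> bool" where
  "avoids \<pi> p \<longleftrightarrow> \<not> contains \<pi> p"

definition fishburn :: "nat list \<Rightarrow> bool" where
  "fishburn \<pi> \<longleftrightarrow> \<not> (\<exists>i j. i < j \<and> j < length \<pi> \<and> i + 1 < length \<pi> \<and>
      \<pi> ! j < \<pi> ! i \<and> \<pi> ! i < \<pi> ! (i + 1) \<and> \<pi> ! i = \<pi> ! j + 1)"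

definition F :: "nat \<Rightarrow> nat list list \<Rightarrow> nat list set" where
  "F n ps = {\<pi>. perm_of n \<pi> \<and> fishburn \<pi> \<and> (\<forall>p \<in> set ps. avoids \<pi> p)}"

end

theory Submission
  imports Defs
begin

lemma c321: "contains \<pi> [3,2,1] \<longleftrightarrow> (\<exists>i j k. i<j \<and> j<k \<and> k<length \<pi> \<and> \<pi>!j<\<pi>!i \<and> \<pi>!k<\<pi>!j)"
proof
  assume "contains \<pi> [3,2,1]"
  then obtain f where f: "\<forall>i j. i<j \<and> j<3 \<longrightarrow> f i < f j" "\<forall>i<3. f i < length \<pi>"
    "\<forall>i<3. \<forall>j<3. (\<pi>!f i < \<pi>!f j) = ([3,2,1::nat]!i < [3,2,1]!j)" using that unfolding contains_def by (simp add: eval_nat_numeral) blast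
  have "f 0 < f 1" "f 1 < f 2" "f 2 < length \<pi>" using f(1)[rule_format, of 0 1] f(1)[rule_format, of 1 2] f(2) by auto
  moreover have "\<pi>!f 1 < \<pi>!f 0" "\<pi>!f 2 < \<pi>!f 1"
    using f(3)[rule_format, of 1 0] f(3)[rule_format, of 2 1] by auto
  ultimately show "\<exists>i j k. i<j \<and> j<k \<and> k<length \<pi> \<and> \<pi>!j<\<pi>!i \<and> \<pi>!k<\<pi>!j" by blast
next
  assume "\<exists>i j k. i<j \<and> j<k \<and> k<length \<pi> \<and> \<pi>!j<\<pi>!i \<and> \<pi>!k<\<pi>!j"
  then obtain i j k where h: "i<j" "j<k" "k<length \<pi>" "\<pi>!j<\<pi>!i" "\<pi>!k<\<pi>!j" by blast
  define f where "f = (\<lambda>x::nat. if x=0 then i else if x = 1 then j else k)"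
  show "contains \<pi> [3,2,1]" unfolding contains_def
    apply (rule exI[of _ f])
    using h by (auto simp: f_def numeral_3_eq_3 less_Suc_eq)
qed

lemma c2134: "contains \<pi> [2,1,3,4] \<longleftrightarrow> (\<exists>i j k l. i<j \<and> j<k \<and> k<l \<and> l<length \<pi> \<and> \<pi>!j<\<pi>!i \<and> \<pi>!i<\<pi>!k \<and> \<pi>!k<\<pi>!l)"
proof
  assume "contains \<pi> [2,1,3,4]"
  then obtain f where f: "\<forall>i j. i<j \<and> j<4 \<longrightarrow> f i < f j" "\<forall>i<4. f i < length \<pi>"
    "\<forall>i<4. \<forall>j<4. (\<pi>!f i < \<pi>!f j) = ([2,1,3,4::nat]!i < [2,1,3,4]!j)" using that unfolding contains_def by (simp add: eval_nat_numeral) blast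
  have "f 0 < f 1" "f 1 < f 2" "f 2 < f 3" "f 3 < length \<pi>" using f(1)[rule_format, of 0 1] f(1)[rule_format, of 1 2] f(1)[rule_format, of 2 3] f(2) by auto
  moreover have "\<pi>!f 1 < \<pi>!f 0" "\<pi>!f 0 < \<pi>!f 2" "\<pi>!f 2 < \<pi>!f 3"
    using f(3)[rule_format, of 1 0] f(3)[rule_format, of 0 2] f(3)[rule_format, of 2 3] by auto
  ultimately show "\<exists>i j k l. i<j \<and> j<k \<and> k<l \<and> l<length \<pi> \<and> \<pi>!j<\<pi>!i \<and> \<pi>!i<\<pi>!k \<and> \<pi>!k<\<pi>!l" by blast
next
  assume "\<exists>i j k l. i<j \<and> j<k \<and> k<l \<and> l<length \<pi> \<and> \<pi>!j<\<pi>!i \<and> \<pi>!i<\<pi>!k \<and> \<pi>!k<\<pi>!l"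
  then obtain i j k l where h: "i<j" "j<k" "k<l" "l<length \<pi>" "\<pi>!j<\<pi>!i" "\<pi>!i<\<pi>!k" "\<pi>!k<\<pi>!l" by blast
  define f where "f = (\<lambda>x::nat. if x=0 then i else if x = 1 then j else if x = 2 then k else l)"
  show "contains \<pi> [2,1,3,4]" unfolding contains_def
    apply (rule exI[of _ f])
    using h by (auto simp: f_def numeral_eq_Suc less_Suc_eq)
qed


definition n321 :: "nat list \<Rightarrow> bool" where
  "n321 \<pi> \<longleftrightarrow> \<not>(\<exists>i j k. i<j \<and> j<k \<and> k<length \<pi> \<and> \<pi>!j<\<pi>!i \<and> \<pi>!k<\<pi>!j)"
definition n2134 :: "nat list \<Rightarrow> bool" where
  "n2134 \<pi> \<longleftrightarrow> \<not>(\<exists>i j k l. i<j \<and> j<k \<and> k<l \<and> l<length \<pi> \<and> \<pi>!j<\<pi>!i \<and> \<pi>!i<\<pi>!k \<and> \<pi>!k<\<pi>!l)"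

lemma P_iff: "\<pi> \<in> F n [[3,2,1],[2,1,3,4]] \<longleftrightarrow> perm_of n \<pi> \<and> fishburn \<pi> \<and> n321 \<pi> \<and> n2134 \<pi>"
proof -
  have e: "(\<forall>p\<in>set [[3,2,1],[2,1,3,4::nat]]. avoids \<pi> p) = (n321 \<pi> \<and> n2134 \<pi>)"
    unfolding n321_def n2134_def c321[symmetric] c2134[symmetric] by (simp add: avoids_def)
  show ?thesis unfolding F_def mem_Collect_eq e by simp
qed

lemma n321_sh: "n321 (1 # map Suc \<sigma>) \<longleftrightarrow> n321 \<sigma>"
  unfolding n321_def
proof (rule iffI; erule contrapos_nn; elim exE conjE)
  fix i j k assume h: "i < j" "j < k" "k < length (1 # map Suc \<sigma>)"
    "(1 # map Suc \<sigma>) ! j < (1 # map Suc \<sigma>) ! i" "(1 # map Suc \<sigma>) ! k < (1 # map Suc \<sigma>) ! j"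
  obtain i' where i: "i = Suc i'" using h by (cases i) (auto simp: nth_Cons')
  obtain j' where j: "j = Suc j'" using h by (cases j) auto
  obtain k' where k: "k = Suc k'" using h by (cases k) auto
  show "\<exists>i j k. i<j \<and> j<k \<and> k<length \<sigma> \<and> \<sigma>!j<\<sigma>!i \<and> \<sigma>!k<\<sigma>!j"
    using h unfolding i j k by (intro exI[of _ i'] exI[of _ j'] exI[of _ k']) auto
next
  fix i j k assume h: "i<j" "j<k" "k<length \<sigma>" "\<sigma>!j<\<sigma>!i" "\<sigma>!k<\<sigma>!j"
  show "\<exists>i j k. i<j \<and> j<k \<and> k<length (1 # map Suc \<sigma>) \<and> (1 # map Suc \<sigma>) ! j < (1 # map Suc \<sigma>) ! i \<and> (1 # map Suc \<sigma>) ! k < (1 # map Suc \<sigma>) ! j"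
    using h by (intro exI[of _ "Suc i"] exI[of _ "Suc j"] exI[of _ "Suc k"]) auto
qed

lemma n2134_sh: "n2134 (1 # map Suc \<sigma>) \<longleftrightarrow> n2134 \<sigma>"
  unfolding n2134_def
proof (rule iffI; erule contrapos_nn; elim exE conjE)
  fix i j k l assume h: "i < j" "j < k" "k < l" "l < length (1 # map Suc \<sigma>)"
    "(1 # map Suc \<sigma>) ! j < (1 # map Suc \<sigma>) ! i" "(1 # map Suc \<sigma>) ! i < (1 # map Suc \<sigma>) ! k" "(1 # map Suc \<sigma>) ! k < (1 # map Suc \<sigma>) ! l"
  obtain i' where i: "i = Suc i'" using h by (cases i) (auto simp: nth_Cons')
  obtain j' where j: "j = Suc j'" using h by (cases j) auto
  obtain k' where k: "k = Suc k'" using h by (cases k) auto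
  obtain l' where l: "l = Suc l'" using h by (cases l) auto
  show "\<exists>i j k l. i<j \<and> j<k \<and> k<l \<and> l<length \<sigma> \<and> \<sigma>!j<\<sigma>!i \<and> \<sigma>!i<\<sigma>!k \<and> \<sigma>!k<\<sigma>!l"
    using h unfolding i j k l by (intro exI[of _ i'] exI[of _ j'] exI[of _ k'] exI[of _ l']) auto
next
  fix i j k l assume h: "i<j" "j<k" "k<l" "l<length \<sigma>" "\<sigma>!j<\<sigma>!i" "\<sigma>!i<\<sigma>!k" "\<sigma>!k<\<sigma>!l"
  show "\<exists>i j k l. i<j \<and> j<k \<and> k<l \<and> l<length (1 # map Suc \<sigma>) \<and> (1 # map Suc \<sigma>) ! j < (1 # map Suc \<sigma>) ! i \<and> (1 # map Suc \<sigma>) ! i < (1 # map Suc \<sigma>) ! k \<and> (1 # map Suc \<sigma>) ! k < (1 # map Suc \<sigma>) ! l"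
    using h by (intro exI[of _ "Suc i"] exI[of _ "Suc j"] exI[of _ "Suc k"] exI[of _ "Suc l"]) auto
qed

lemma fish_sh: "fishburn (1 # map Suc \<sigma>) \<longleftrightarrow> fishburn \<sigma>"
  unfolding fishburn_def
proof (rule iffI; erule contrapos_nn; elim exE conjE)
  fix i j assume h: "i < j" "j < length (1 # map Suc \<sigma>)" "i + 1 < length (1 # map Suc \<sigma>)"
    "(1 # map Suc \<sigma>) ! j < (1 # map Suc \<sigma>) ! i" "(1 # map Suc \<sigma>) ! i < (1 # map Suc \<sigma>) ! (i + 1)"
    "(1 # map Suc \<sigma>) ! i = (1 # map Suc \<sigma>) ! j + 1"
  obtain j' where j: "j = Suc j'" using h by (cases j) auto
  obtain i' where i: "i = Suc i'" using h unfolding j by (cases i) auto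
  show "\<exists>i j. i < j \<and> j < length \<sigma> \<and> i + 1 < length \<sigma> \<and> \<sigma> ! j < \<sigma> ! i \<and> \<sigma> ! i < \<sigma> ! (i + 1) \<and> \<sigma> ! i = \<sigma> ! j + 1"
    using h unfolding i j by (intro exI[of _ i'] exI[of _ j']) auto
next
  fix i j assume h: "i < j" "j < length \<sigma>" "i + 1 < length \<sigma>" "\<sigma> ! j < \<sigma> ! i" "\<sigma> ! i < \<sigma> ! (i + 1)" "\<sigma> ! i = \<sigma> ! j + 1"
  show "\<exists>i j. i < j \<and> j < length (1 # map Suc \<sigma>) \<and> i + 1 < length (1 # map Suc \<sigma>) \<and>
      (1 # map Suc \<sigma>) ! j < (1 # map Suc \<sigma>) ! i \<and> (1 # map Suc \<sigma>) ! i < (1 # map Suc \<sigma>) ! (i + 1) \<and>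
      (1 # map Suc \<sigma>) ! i = (1 # map Suc \<sigma>) ! j + 1"
    using h by (intro exI[of _ "Suc i"] exI[of _ "Suc j"]) auto
qed

lemma perm_sh: "perm_of (Suc n) (1 # map Suc \<sigma>) \<longleftrightarrow> perm_of n \<sigma>"
proof
  assume h: "perm_of (Suc n) (1 # map Suc \<sigma>)"
  have d: "distinct \<sigma>" "1 \<notin> Suc ` set \<sigma>" using h by (auto simp: perm_of_def distinct_map)
  have s: "insert 1 (Suc ` set \<sigma>) = {1..Suc n}" using h by (simp add: perm_of_def)
  have "Suc ` set \<sigma> = {1..Suc n} - {1}" using s d(2) by blast
  also have "\<dots> = Suc ` {1..n}" by (auto simp: image_iff)
  finally have "set \<sigma> = {1..n}" by (simp only: inj_image_eq_iff inj_Suc)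
  then show "perm_of n \<sigma>" using d by (simp add: perm_of_def)
next
  assume h: "perm_of n \<sigma>"
  then have "set \<sigma> = {1..n}" "distinct \<sigma>" by (auto simp: perm_of_def)
  moreover have "insert 1 (Suc ` {1..n}) = {1..Suc n}" by (auto simp: image_iff)
  ultimately show "perm_of (Suc n) (1 # map Suc \<sigma>)" by (auto simp: perm_of_def distinct_map)
qed

lemma P_sh: "1 # map Suc \<sigma> \<in> F (Suc n) [[3,2,1],[2,1,3,4]] \<longleftrightarrow> \<sigma> \<in> F n [[3,2,1],[2,1,3,4]]"
  unfolding P_iff perm_sh fish_sh n321_sh n2134_sh ..

lemma P_start1:
  assumes "\<pi> \<in> F (Suc n) [[3,2,1],[2,1,3,4]]" "\<pi> ! 0 = 1"
  shows "\<pi> = 1 # map Suc (map (\<lambda>x. x - 1) (tl \<pi>))"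
proof -
  have p: "perm_of (Suc n) \<pi>" using assms unfolding P_iff by simp
  then have len: "length \<pi> = Suc n" using distinct_card by (fastforce simp: perm_of_def)
  then have e: "\<pi> = 1 # tl \<pi>" using assms(2) by (cases \<pi>) auto
  then have "1 \<notin> set (tl \<pi>)" "set (tl \<pi>) \<subseteq> {1..Suc n}" using p unfolding perm_of_def
    by (metis distinct.simps(2)) (metis e p perm_of_def set_subset_Cons)
  then have "\<forall>x\<in>set (tl \<pi>). x > 0" by auto
  then have "map Suc (map (\<lambda>x. x - 1) (tl \<pi>)) = tl \<pi>" by (induct "tl \<pi>") (auto simp: map_idI)
  then show ?thesis using e by simp
qed


definition gA :: "nat \<Rightarrow> nat \<Rightarrow> nat" where "gA N i = (if i=0 then N else i)"
definition gB :: "nat \<Rightarrow> nat \<Rightarrow> nat \<Rightarrow> nat" where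
  "gB N j i = (if i=0 then N-1 else if i \<le> j then i else if i = j+1 then N else i-1)"
definition gC :: "nat \<Rightarrow> nat \<Rightarrow> nat \<Rightarrow> nat" where
  "gC N j i = (if i=0 then N-2 else if i \<le> j then i else if i=j+1 then N else if i = N-1 then N-1 else i-1)"

lemma map_P:
  assumes inj: "\<And>a b. a < N \<Longrightarrow> b < N \<Longrightarrow> g a = g b \<Longrightarrow> a = b"
    and rng: "\<And>a. a < N \<Longrightarrow> 1 \<le> g a \<and> g a \<le> N"
    and f: "\<And>i j. i < j \<Longrightarrow> j < N \<Longrightarrow> i + 1 < N \<Longrightarrow> g j < g i \<Longrightarrow> g i < g (i+1) \<Longrightarrow> g i = g j + 1 \<Longrightarrow> False"
    and a: "\<And>i j k. i<j \<Longrightarrow> j<k \<Longrightarrow> k<N \<Longrightarrow> g j < g i \<Longrightarrow> g k < g j \<Longrightarrow> False"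
    and b: "\<And>i j k l. i<j \<Longrightarrow> j<k \<Longrightarrow> k<l \<Longrightarrow> l<N \<Longrightarrow> g j < g i \<Longrightarrow> g i < g k \<Longrightarrow> g k < g l \<Longrightarrow> False"
  shows "map g [0..<N] \<in> F N [[3,2,1],[2,1,3,4]]"
proof -
  have io: "inj_on g {0..<N}" using inj by (auto simp: inj_on_def)
  have s: "g ` {0..<N} \<subseteq> {1..N}" using rng by auto
  have "card (g ` {0..<N}) = card {1..N}" using card_image[OF io] by simp
  then have "g ` {0..<N} = {1..N}" using s by (simp add: card_subset_eq)
  then have "perm_of N (map g [0..<N])" using io by (simp add: perm_of_def distinct_map)
  moreover have "fishburn (map g [0..<N])" unfolding fishburn_def using f
    by (auto simp del: upt_Suc) (metis (no_types, lifting) Suc_lessD add.commute add_lessD1 nth_map_upt plus_1_eq_Suc)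
  moreover have "n321 (map g [0..<N])" unfolding n321_def using a by auto
  moreover have "n2134 (map g [0..<N])" unfolding n2134_def using b by auto
  ultimately show ?thesis unfolding P_iff by simp
qed

lemma A_P: "2 \<le> N \<Longrightarrow> map (gA N) [0..<N] \<in> F N [[3,2,1],[2,1,3,4]]"
  by (rule map_P) (auto simp: gA_def split: if_splits)

lemma B_P: "1 \<le> j \<Longrightarrow> j \<le> N - 2 \<Longrightarrow> map (gB N j) [0..<N] \<in> F N [[3,2,1],[2,1,3,4]]"
  by (rule map_P) (auto simp: gB_def split: if_splits)

lemma C_P: "1 \<le> j \<Longrightarrow> j \<le> N - 3 \<Longrightarrow> map (gC N j) [0..<N] \<in> F N [[3,2,1],[2,1,3,4]]"
  by (rule map_P) (auto simp: gC_def split: if_splits)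

lemma nth_upt': "k < j - i \<Longrightarrow> [i..<j] ! k = i + k" by simp

lemma A_eq: "1 \<le> N \<Longrightarrow> N # [1..<N] = map (gA N) [0..<N]"
  by (rule nth_equalityI) (auto simp: nth_Cons' gA_def)

lemma B_eq: "1 \<le> j \<Longrightarrow> j \<le> N - 2 \<Longrightarrow> 2 \<le> N \<Longrightarrow>
  (N-1) # [1..<j+1] @ N # [j+1..<N-1] = map (gB N j) [0..<N]"
  by (rule nth_equalityI) (auto simp: nth_Cons' nth_append gB_def)

lemma C_eq: "1 \<le> j \<Longrightarrow> j \<le> N - 3 \<Longrightarrow> 3 \<le> N \<Longrightarrow>
  (N-2) # [1..<j+1] @ N # [j+1..<N-2] @ [N-1] = map (gC N j) [0..<N]"
proof (rule nth_equalityI)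
  assume h: "1 \<le> j" "j \<le> N - 3" "3 \<le> N"
  show "length ((N-2) # [1..<j+1] @ N # [j+1..<N-2] @ [N-1]) = length (map (gC N j) [0..<N])" using h by simp
  fix i assume "i < length ((N-2) # [1..<j+1] @ N # [j+1..<N-2] @ [N-1])"
  then have i: "i < N" using h by simp
  define L where "L = [1..<j+1] @ N # [j+1..<N-2] @ [N-1]"
  have "i = 0 \<or> (1 \<le> i \<and> i \<le> j) \<or> i = j + 1 \<or> (j + 2 \<le> i \<and> i \<le> N - 2) \<or> i = N - 1" using i by auto
  then show "((N-2) # [1..<j+1] @ N # [j+1..<N-2] @ [N-1]) ! i = map (gC N j) [0..<N] ! i"
  proof (elim disjE)
    assume "i = 0" then show ?thesis using h by (simp add: gC_def)
  next
    assume a: "1 \<le> i \<and> i \<le> j"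
    then have "L ! (i - 1) = i" unfolding L_def using a h by (auto simp: nth_append simp del: upt_Suc)
    then show ?thesis using a i h unfolding L_def by (auto simp: gC_def nth_Cons' simp del: upt_Suc)
  next
    assume a: "i = j + 1"
    then have "L ! (i - 1) = N" unfolding L_def using a h by (auto simp: nth_append simp del: upt_Suc)
    then show ?thesis using a i h unfolding L_def by (auto simp: gC_def nth_Cons' simp del: upt_Suc)
  next
    assume a: "j + 2 \<le> i \<and> i \<le> N - 2"
    then have "L ! (i - 1) = i - 1" unfolding L_def using a h by (auto simp: nth_append simp del: upt_Suc)
    then show ?thesis using a i h unfolding L_def by (auto simp: gC_def nth_Cons' simp del: upt_Suc)
  next
    assume a: "i = N - 1"
    then have "L ! (i - 1) = N - 1" unfolding L_def using a h by (auto simp: nth_append simp del: upt_Suc)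
    then show ?thesis using a i h unfolding L_def by (auto simp: gC_def nth_Cons' simp del: upt_Suc)
  qed
qed


lemma sorted_filter_nth:
  assumes "\<And>a b. a < b \<Longrightarrow> b < length xs \<Longrightarrow> P (xs!a) \<Longrightarrow> P (xs!b) \<Longrightarrow> xs!a < xs!b"
  shows "sorted_wrt (<) (filter P (xs::nat list))"
  using assms
proof (induct xs)
  case Nil then show ?case by simp
next
  case (Cons x xs)
  have ih: "sorted_wrt (<) (filter P xs)"
    by (rule Cons.hyps) (use Cons.prems[of "Suc a" "Suc b" for a b] in auto)
  have "\<forall>y\<in>set (filter P xs). P x \<longrightarrow> x < y"
  proof (intro ballI impI)
    fix y assume "y \<in> set (filter P xs)" "P x"
    then obtain b where "b < length xs" "xs!b = y" "P y" by (auto simp: in_set_conv_nth)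
    then show "x < y" using Cons.prems[of 0 "Suc b"] \<open>P x\<close> by auto
  qed
  then show ?case using ih by auto
qed

lemma nonone:
  assumes P: "\<pi> \<in> F N [[3,2,1],[2,1,3,4]]" and ne: "\<pi> \<noteq> []" and k1: "\<pi> ! 0 \<noteq> 1"
  shows "\<pi> = N # [1..<N] \<or>
    (\<exists>j. 1 \<le> j \<and> j \<le> N - 2 \<and> \<pi> = (N-1) # [1..<j+1] @ N # [j+1..<N-1]) \<or>
    (\<exists>j. 1 \<le> j \<and> j \<le> N - 3 \<and> \<pi> = (N-2) # [1..<j+1] @ N # [j+1..<N-2] @ [N-1])"
proof -
  have perm: "distinct \<pi>" "set \<pi> = {1..N}" and fish: "fishburn \<pi>" and a321: "n321 \<pi>" and a2134: "n2134 \<pi>"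
    using P unfolding P_iff perm_of_def by auto
  have len: "length \<pi> = N" using perm distinct_card by fastforce
  define k where "k = \<pi> ! 0"
  have kN: "1 \<le> k" "k \<le> N" using perm ne k_def nth_mem[of 0 \<pi>] by auto
  have k2: "2 \<le> k" using kN k1 k_def by auto
  have dist: "\<And>a b. a < N \<Longrightarrow> b < N \<Longrightarrow> \<pi>!a = \<pi>!b \<Longrightarrow> a = b"
    using perm(1) len by (simp add: nth_eq_iff_index_eq)
  have val: "\<And>v. 1 \<le> v \<Longrightarrow> v \<le> N \<Longrightarrow> \<exists>p<N. \<pi>!p = v"
    using perm(2) len by (metis atLeastAtMost_iff in_set_conv_nth)
  have rng: "\<And>a. a < N \<Longrightarrow> 1 \<le> \<pi>!a \<and> \<pi>!a \<le> N"
    using perm(2) len by (metis atLeastAtMost_iff nth_mem)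
  have N2: "2 \<le> N" using k2 kN by auto
  have lt1: "\<pi>!1 < k"
  proof (rule ccontr)
    assume "\<not> \<pi>!1 < k"
    moreover have "\<pi>!1 \<noteq> k" using dist[of 1 0] N2 k_def by auto
    ultimately have gt: "k < \<pi>!1" by auto
    have "1 \<le> k-1" "k-1 \<le> N" using k2 kN by auto
    then obtain p where p: "p < N" "\<pi>!p = k - 1" using val[of "k-1"] by blast
    have "p \<noteq> 0" using p k_def k2 by (cases "p = 0") auto
    then have "0 < p" "p < N" "0+1 < N" "\<pi>!p < \<pi>!0" "\<pi>!0 < \<pi>!(0+1)" "\<pi>!0 = \<pi>!p + 1"
      using p gt k2 N2 k_def by auto
    then show False using fish unfolding fishburn_def len by blast
  qed
  have p1: "\<pi>!1 = 1"
  proof (rule ccontr)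
    assume ne1: "\<pi>!1 \<noteq> 1"
    obtain q where q: "q < N" "\<pi>!q = 1" using val[of 1] N2 by auto
    have "q \<noteq> 0" using q k_def k1 by (cases "q = 0") auto
    moreover have "q \<noteq> 1" using q ne1 by auto
    ultimately have "1 < q" by auto
    moreover have "1 < \<pi>!1" using rng[of 1] N2 ne1 by auto
    ultimately have "(0::nat) < 1" "1 < q" "q < N" "\<pi>!1 < \<pi>!0" "\<pi>!q < \<pi>!1" using q lt1 k_def by auto
    then show False using a321 unfolding n321_def len by blast
  qed
  have b: "\<And>a b. 0 < a \<Longrightarrow> a < b \<Longrightarrow> b < N \<Longrightarrow> \<pi>!a < k \<Longrightarrow> \<pi>!b < k \<Longrightarrow> \<pi>!a < \<pi>!b"
  proof (rule ccontr)
    fix a b assume h: "0 < a" "a < b" "b < N" "\<pi>!a < k" "\<pi>!b < k" "\<not> \<pi>!a < \<pi>!b"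
    then have "\<pi>!b < \<pi>!a" using dist[of a b] by (cases "\<pi>!a = \<pi>!b") auto
    then show False using a321 h unfolding n321_def len k_def by blast
  qed
  have c: "\<And>a b. 1 < a \<Longrightarrow> a < b \<Longrightarrow> b < N \<Longrightarrow> k < \<pi>!a \<Longrightarrow> k < \<pi>!b \<Longrightarrow> \<pi>!b < \<pi>!a"
  proof (rule ccontr)
    fix a b assume h: "1 < a" "a < b" "b < N" "k < \<pi>!a" "k < \<pi>!b" "\<not> \<pi>!b < \<pi>!a"
    then have "\<pi>!a < \<pi>!b" using dist[of a b] by (cases "\<pi>!a = \<pi>!b") auto
    moreover have "\<pi>!1 < \<pi>!0" using p1 k2 k_def by auto
    ultimately have "(0::nat) < 1" "1 < a" "a < b" "b < N" "\<pi>!1 < \<pi>!0" "\<pi>!0 < \<pi>!a" "\<pi>!a < \<pi>!b" using h k_def by auto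
    then show False using a2134 unfolding n2134_def len by blast
  qed
  have pe: "\<pi> = k # tl \<pi>" using ne k_def by (cases \<pi>) auto
  have tlset: "set (tl \<pi>) = {1..N} - {k}" and kn: "k \<notin> set (tl \<pi>)" and dtl: "distinct (tl \<pi>)"
    using perm pe by (metis Diff_insert_absorb distinct.simps(2) list.simps(15))+
  have srt: "sorted_wrt (<) (filter (\<lambda>x. x < k) (tl \<pi>))"
  proof (rule sorted_filter_nth)
    fix a b' assume h: "a < b'" "b' < length (tl \<pi>)" "tl \<pi> ! a < k" "tl \<pi> ! b' < k"
    then have "\<pi> ! Suc a < k" "\<pi> ! Suc b' < k" "Suc b' < N" by (simp_all add: nth_tl len)
    then have "\<pi> ! Suc a < \<pi> ! Suc b'" using b[of "Suc a" "Suc b'"] h(1) by simp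
    then show "tl \<pi> ! a < tl \<pi> ! b'" using h by (simp add: nth_tl)
  qed
  have st: "set (filter (\<lambda>x. x < k) (tl \<pi>)) = set [1..<k]"
  proof -
    have "set (filter (\<lambda>x. x < k) (tl \<pi>)) = {x \<in> {1..N} - {k}. x < k}" by (simp only: set_filter tlset)
    also have "\<dots> = {1..<k}" using kN by auto
    also have "\<dots> = set [1..<k]" by simp
    finally show ?thesis .
  qed
  have "sorted (filter (\<lambda>x. x < k) (tl \<pi>))" "distinct (filter (\<lambda>x. x < k) (tl \<pi>))"
    using srt by (simp_all add: strict_sorted_iff)
  then have L: "filter (\<lambda>x. x < k) (tl \<pi>) = [1..<k]"
    using st sorted_distinct_set_unique[of "filter (\<lambda>x. x < k) (tl \<pi>)" "[1..<k]"] by simp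
  have NK: "N \<le> k + 2"
  proof (rule ccontr)
    assume "\<not> N \<le> k + 2"
    then obtain pa pb pc where pa: "pa < N" "\<pi>!pa = k+1" and pb: "pb < N" "\<pi>!pb = k+2" and pc: "pc < N" "\<pi>!pc = k+3"
      using val[of "k+1"] val[of "k+2"] val[of "k+3"] by auto
    have "pa \<noteq> 0" using pa k_def by (cases "pa = 0") auto
    moreover have "pb \<noteq> 0" using pb k_def by (cases "pb = 0") auto
    moreover have "pc \<noteq> 0" using pc k_def by (cases "pc = 0") auto
    moreover have "pa \<noteq> 1" using pa p1 k2 by (cases "pa = 1") auto
    moreover have "pb \<noteq> 1" using pb p1 k2 by (cases "pb = 1") auto
    moreover have "pc \<noteq> 1" using pc p1 k2 by (cases "pc = 1") auto
    ultimately have g: "1 < pa" "1 < pb" "1 < pc" by auto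
    have "pc < pb"
    proof (rule ccontr)
      assume "\<not> pc < pb" then have "pb < pc" using pb pc by (cases "pb = pc") auto
      then show False using c[of pb pc] g pb pc by auto
    qed
    moreover have "pb < pa"
    proof (rule ccontr)
      assume "\<not> pb < pa" then have "pa < pb" using pa pb by (cases "pa = pb") auto
      then show False using c[of pa pb] g pa pb by auto
    qed
    ultimately show False using a321 pa pb pc unfolding n321_def len by fastforce
  qed
  have Ltl: "length (tl \<pi>) = N - 1" using len by simp
  have nth_tl': "\<And>i. \<pi> ! Suc i = tl \<pi> ! i" using pe by (metis nth_Cons_Suc)
  show ?thesis
  proof (cases "N = k")
    case True
    have "\<forall>x\<in>set (tl \<pi>). x < k"
    proof
      fix x assume "x \<in> set (tl \<pi>)" then have "x \<in> {1..N} - {k}" using tlset by simp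
      then show "x < k" using True by auto
    qed
    then have "filter (\<lambda>x. x < k) (tl \<pi>) = tl \<pi>" by (simp add: filter_id_conv)
    then have "\<pi> = N # [1..<N]" using pe L True by simp
    then show ?thesis by simp
  next
    case False
    have Nin: "N \<in> set (tl \<pi>)" using False tlset kN by auto
    then obtain us vs where uv: "tl \<pi> = us @ N # vs" by (meson split_list)
    have nus: "N \<notin> set us" "N \<notin> set vs" using dtl uv by auto
    have us0: "us \<noteq> []"
    proof
      assume "us = []" then have "\<pi> ! 1 = N" using uv nth_tl'[of 0] by simp
      then show False using p1 N2 by simp
    qed
    show ?thesis
    proof (cases "N = k + 1")
      case True
      have sm: "\<forall>x\<in>set us. x < k" "\<forall>x\<in>set vs. x < k"
      proof -
        { fix x assume "x \<in> set us \<or> x \<in> set vs"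
          then have "x \<in> set (tl \<pi>)" "x \<noteq> N" using uv nus by auto
          then have "x \<in> {1..N} - {k}" "x \<noteq> N" using tlset by auto
          then have "x < k" using True by auto }
        then show "\<forall>x\<in>set us. x < k" "\<forall>x\<in>set vs. x < k" by auto
      qed
      have "filter (\<lambda>x. x < k) (tl \<pi>) = filter (\<lambda>x. x < k) us @ filter (\<lambda>x. x < k) vs"
        using uv True by simp
      then have "filter (\<lambda>x. x < k) (tl \<pi>) = us @ vs" using sm by (simp add: filter_id_conv)
      then have e: "us @ vs = [1..<k]" using L by simp
      define j where "j = length us"
      have "us = take j [1..<k]" "vs = drop j [1..<k]" using e j_def by (metis append_eq_conv_conj)+
      moreover have "j + 1 \<le> k" using arg_cong[OF e, of length] j_def k2 by simp
      ultimately have "us = [1..<j+1]" "vs = [j+1..<k]" using take_upt[of 1 j k] drop_upt[of j 1 k]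
        by (simp_all del: upt_Suc add: add.commute)
      moreover have "length us + length vs = k - 1" using arg_cong[OF e, of length] by simp
      then have "1 \<le> j" "j \<le> N - 2" using us0 j_def True by (auto simp: Suc_le_eq)
      moreover have "k = N - 1" using True by simp
      ultimately have "\<pi> = (N-1) # [1..<j+1] @ N # [j+1..<N-1] \<and> 1 \<le> j \<and> j \<le> N - 2"
        using pe uv by simp
      then show ?thesis by blast
    next
      case False
      then have Nk2: "N = k + 2" using NK \<open>N \<noteq> k\<close> kN by auto
      have N1in: "N - 1 \<in> set (tl \<pi>)" using tlset Nk2 by auto
      have "N - 1 \<notin> set us"
      proof
        assume "N - 1 \<in> set us"
        then obtain a where a: "a < length us" "us ! a = N - 1" by (auto simp: in_set_conv_nth)
        have "a \<noteq> 0" using a uv nth_tl'[of 0] p1 Nk2 k2 us0 by (cases "a = 0") (auto simp: nth_append)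
        moreover have "\<pi> ! Suc a = N - 1" using a uv nth_tl'[of a] by (simp add: nth_append)
        moreover have "\<pi> ! Suc (length us) = N" using uv nth_tl'[of "length us"] by (simp add: nth_append)
        moreover have "Suc (length us) < N" using Ltl uv N2 by auto
        ultimately show False using c[of "Suc a" "Suc (length us)"] a Nk2 by auto
      qed
      then have "N - 1 \<in> set vs" using N1in uv Nk2 by auto
      then obtain ws zs where wz: "vs = ws @ (N-1) # zs" by (meson split_list)
      have dvs: "distinct vs" using dtl uv by simp
      have zs0: "zs = []"
      proof (rule ccontr)
        assume "zs \<noteq> []"
        then obtain z zs' where zz: "zs = z # zs'" by (cases zs) auto
        have "z \<noteq> N" "z \<noteq> N - 1" "z \<noteq> k" using nus dvs wz zz kn uv by auto
        moreover have "z \<in> set (tl \<pi>)" using uv wz zz by auto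
        ultimately have zk: "z < N - 1" using tlset Nk2 by auto
        define i1 where "i1 = Suc (length us)"
        define i2 where "i2 = Suc (Suc (length us + length ws))"
        have "\<pi> ! i1 = N" unfolding i1_def nth_tl' uv by (simp add: nth_append)
        moreover have "\<pi> ! i2 = N - 1" unfolding i2_def nth_tl' uv wz by (simp add: nth_append)
        moreover have "\<pi> ! Suc i2 = z" unfolding i2_def nth_tl' uv wz zz by (simp add: nth_append)
        moreover have "Suc i2 < N" using Ltl uv wz zz unfolding i2_def by auto
        moreover have "i1 < i2" unfolding i1_def i2_def by auto
        ultimately have "i1 < i2" "i2 < Suc i2" "Suc i2 < N" "\<pi>!i2 < \<pi>!i1" "\<pi>!Suc i2 < \<pi>!i2" using zk Nk2 by auto
        then show False using a321 unfolding n321_def len by blast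
      qed
      have nws: "N - 1 \<notin> set ws" using dvs wz by auto
      have sm: "\<forall>x\<in>set us. x < k" "\<forall>x\<in>set ws. x < k"
      proof -
        { fix x assume "x \<in> set us \<or> x \<in> set ws"
          then have "x \<in> set (tl \<pi>)" "x \<noteq> N" "x \<noteq> N - 1" using uv wz nus nws \<open>N - 1 \<notin> set us\<close> by auto
          then have "x \<in> {1..N} - {k}" "x \<noteq> N" "x \<noteq> N - 1" using tlset by auto
          then have "x < k" using Nk2 by auto }
        then show "\<forall>x\<in>set us. x < k" "\<forall>x\<in>set ws. x < k" by auto
      qed
      have "filter (\<lambda>x. x < k) (tl \<pi>) = filter (\<lambda>x. x < k) us @ filter (\<lambda>x. x < k) ws"
        using uv wz zs0 Nk2 by simp
      then have "filter (\<lambda>x. x < k) (tl \<pi>) = us @ ws" using sm by (simp add: filter_id_conv)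
      then have e: "us @ ws = [1..<k]" using L by simp
      define j where "j = length us"
      have "us = take j [1..<k]" "ws = drop j [1..<k]" using e j_def by (metis append_eq_conv_conj)+
      moreover have "j + 1 \<le> k" using arg_cong[OF e, of length] j_def k2 by simp
      ultimately have "us = [1..<j+1]" "ws = [j+1..<k]" using take_upt[of 1 j k] drop_upt[of j 1 k]
        by (simp_all del: upt_Suc add: add.commute)
      moreover have "length us + length ws = k - 1" using arg_cong[OF e, of length] by simp
      then have "1 \<le> j" "j \<le> N - 3" using us0 j_def Nk2 by (auto simp: Suc_le_eq)
      moreover have "k = N - 2" using Nk2 by simp
      ultimately have "\<pi> = (N-2) # [1..<j+1] @ N # [j+1..<N-2] @ [N-1] \<and> 1 \<le> j \<and> j \<le> N - 3"
        using pe uv wz zs0 by simp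
      then show ?thesis by blast
    qed
  qed
qed

lemma map_upt_0: "map g [0..<Suc n] ! 0 = g 0"
  by (simp only: upt_conv_Cons[OF zero_less_Suc] list.map nth_Cons_0)

definition NonOne :: "nat \<Rightarrow> nat list set" where
  "NonOne N = {map (gA N) [0..<N]} \<union> (\<lambda>j. map (gB N j) [0..<N]) ` {1..N-2} \<union> (\<lambda>j. map (gC N j) [0..<N]) ` {1..N-3}"

lemma len_P: "\<pi> \<in> F n [[3,2,1],[2,1,3,4]] \<Longrightarrow> length \<pi> = n"
  unfolding P_iff perm_of_def using distinct_card by fastforce

lemma fin_P: "finite (F n [[3,2,1],[2,1,3,4]])"
proof (rule finite_subset)
  show "F n [[3,2,1],[2,1,3,4]] \<subseteq> {xs. set xs \<subseteq> {1..n} \<and> length xs = n}"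
  proof
    fix x assume h: "x \<in> F n [[3,2,1],[2,1,3,4]]"
    have "length x = n" using len_P[OF h] .
    moreover have "set x = {1..n}" using h unfolding P_iff perm_of_def by simp
    ultimately show "x \<in> {xs. set xs \<subseteq> {1..n} \<and> length xs = n}" by simp
  qed
  show "finite {xs. set xs \<subseteq> {1..n} \<and> length xs = n}" by (rule finite_lists_length_eq) simp
qed

lemma sub1: "\<pi> \<in> F (Suc m) [[3,2,1],[2,1,3,4]] \<Longrightarrow> \<pi> ! 0 = 1 \<Longrightarrow> \<pi> \<in> (\<lambda>\<sigma>. 1 # map Suc \<sigma>) ` F m [[3,2,1],[2,1,3,4]]"
  using P_start1[of \<pi> m] P_sh[of "map (\<lambda>x. x - 1) (tl \<pi>)" m] by (metis image_eqI)

lemma P0: "F 0 [[3,2,1],[2,1,3,4]] = {[]}"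
proof -
  have "[] \<in> F 0 [[3,2,1],[2,1,3,4]]" unfolding P_iff perm_of_def fishburn_def n321_def n2134_def by simp
  then show ?thesis using len_P[of _ 0] by auto
qed

lemma P1: "F 1 [[3,2,1],[2,1,3,4]] = (\<lambda>\<sigma>. 1 # map Suc \<sigma>) ` F 0 [[3,2,1],[2,1,3,4]]"
proof
  show "(\<lambda>\<sigma>. 1 # map Suc \<sigma>) ` F 0 [[3,2,1],[2,1,3,4]] \<subseteq> F 1 [[3,2,1],[2,1,3,4]]"
    using P_sh[of _ 0] by auto
  show "F 1 [[3,2,1],[2,1,3,4]] \<subseteq> (\<lambda>\<sigma>. 1 # map Suc \<sigma>) ` F 0 [[3,2,1],[2,1,3,4]]"
  proof
    fix \<pi> assume h: "\<pi> \<in> F 1 [[3,2,1],[2,1,3,4]]"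
    then have "length \<pi> = 1" "set \<pi> = {1}" using len_P unfolding P_iff perm_of_def by auto
    then have "\<pi> ! 0 = 1" by (metis in_set_conv_nth singletonD zero_less_one)
    then show "\<pi> \<in> (\<lambda>\<sigma>. 1 # map Suc \<sigma>) ` F 0 [[3,2,1],[2,1,3,4]]" using sub1[of \<pi> 0] h by simp
  qed
qed

lemma decomp: "F (Suc (Suc m)) [[3,2,1],[2,1,3,4]] = (\<lambda>\<sigma>. 1 # map Suc \<sigma>) ` F (Suc m) [[3,2,1],[2,1,3,4]] \<union> NonOne (Suc (Suc m))"
proof
  show "F (Suc (Suc m)) [[3,2,1],[2,1,3,4]] \<subseteq> (\<lambda>\<sigma>. 1 # map Suc \<sigma>) ` F (Suc m) [[3,2,1],[2,1,3,4]] \<union> NonOne (Suc (Suc m))"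
  proof
    fix \<pi> assume h: "\<pi> \<in> F (Suc (Suc m)) [[3,2,1],[2,1,3,4]]"
    then have ne: "\<pi> \<noteq> []" using len_P by fastforce
    show "\<pi> \<in> (\<lambda>\<sigma>. 1 # map Suc \<sigma>) ` F (Suc m) [[3,2,1],[2,1,3,4]] \<union> NonOne (Suc (Suc m))"
    proof (cases "\<pi> ! 0 = 1")
      case True then show ?thesis using sub1 h by blast
    next
      case False
      let ?N = "Suc (Suc m)"
      from nonone[OF h ne False] show ?thesis
      proof (elim disjE exE conjE)
        assume "\<pi> = ?N # [1..<?N]"
        then have "\<pi> = map (gA ?N) [0..<?N]" using A_eq[of ?N] by simp
        then show ?thesis unfolding NonOne_def by blast
      next
        fix j assume "1 \<le> j" "j \<le> ?N - 2" "\<pi> = (?N-1) # [1..<j+1] @ ?N # [j+1..<?N-1]"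
        then have "\<pi> = map (gB ?N j) [0..<?N]" "j \<in> {1..?N-2}" using B_eq[of j ?N] by simp_all
        then show ?thesis unfolding NonOne_def by blast
      next
        fix j assume "1 \<le> j" "j \<le> ?N - 3" "\<pi> = (?N-2) # [1..<j+1] @ ?N # [j+1..<?N-2] @ [?N-1]"
        then have "\<pi> = map (gC ?N j) [0..<?N]" "j \<in> {1..?N-3}" using C_eq[of j ?N] by simp_all
        then show ?thesis unfolding NonOne_def by blast
      qed
    qed
  qed
  show "(\<lambda>\<sigma>. 1 # map Suc \<sigma>) ` F (Suc m) [[3,2,1],[2,1,3,4]] \<union> NonOne (Suc (Suc m)) \<subseteq> F (Suc (Suc m)) [[3,2,1],[2,1,3,4]]"
    using P_sh[of _ "Suc m"] A_P[of "Suc (Suc m)"] B_P[of _ "Suc (Suc m)"] C_P[of _ "Suc (Suc m)"]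
    unfolding NonOne_def by auto
qed

lemma card_NonOne: "card (NonOne (Suc (Suc m))) = 1 + m + (m - 1)"
proof -
  let ?N = "Suc (Suc m)"
  define A where "A = {map (gA ?N) [0..<?N]}"
  define B where "B = (\<lambda>j. map (gB ?N j) [0..<?N]) ` {1..?N-2}"
  define C where "C = (\<lambda>j. map (gC ?N j) [0..<?N]) ` {1..?N-3}"
  have injB: "inj_on (\<lambda>j. map (gB ?N j) [0..<?N]) {1..?N-2}"
  proof (rule inj_onI)
    fix j j' assume h: "j \<in> {1..?N-2}" "j' \<in> {1..?N-2}" "map (gB ?N j) [0..<?N] = map (gB ?N j') [0..<?N]"
    have "j + 1 < ?N" using h(1) by auto
    then have "gB ?N j (j+1) = gB ?N j' (j+1)" using h(3) by (auto simp: map_eq_conv simp del: upt_Suc)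
    then show "j = j'" using h(1,2) unfolding gB_def by (auto split: if_splits)
  qed
  have injC: "inj_on (\<lambda>j. map (gC ?N j) [0..<?N]) {1..?N-3}"
  proof (rule inj_onI)
    fix j j' assume h: "j \<in> {1..?N-3}" "j' \<in> {1..?N-3}" "map (gC ?N j) [0..<?N] = map (gC ?N j') [0..<?N]"
    have "j + 1 < ?N" using h(1) by auto
    then have "gC ?N j (j+1) = gC ?N j' (j+1)" using h(3) by (auto simp: map_eq_conv simp del: upt_Suc)
    then show "j = j'" using h(1,2) unfolding gC_def by (auto split: if_splits)
  qed
  have cB: "card B = m" unfolding B_def using card_image[OF injB] by simp
  have cC: "card C = m - 1" unfolding C_def using card_image[OF injC] by simp
  have hA: "\<forall>x\<in>A. x ! 0 = ?N" unfolding A_def by (simp add: map_upt_0 gA_def del: upt_Suc)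
  have hB: "\<forall>x\<in>B. x ! 0 = ?N - 1" unfolding B_def by (auto simp: map_upt_0 gB_def simp del: upt_Suc)
  have hC: "\<forall>x\<in>C. x ! 0 = ?N - 2" unfolding C_def by (auto simp: map_upt_0 gC_def simp del: upt_Suc)
  have d1: "A \<inter> B = {}"
  proof -
    { fix x assume "x \<in> A" "x \<in> B"
      then have "x ! 0 = ?N" "x ! 0 = ?N - 1" using hA hB by auto
      then have False by simp }
    then show ?thesis by blast
  qed
  have d2: "(A \<union> B) \<inter> C = {}"
  proof -
    { fix x assume "x \<in> A \<or> x \<in> B" "x \<in> C"
      then have "x ! 0 = ?N \<or> x ! 0 = ?N - 1" "x ! 0 = ?N - 2" using hA hB hC by auto
      then have False by simp }
    then show ?thesis by blast
  qed
  have fA: "finite A" "finite B" "finite C" unfolding A_def B_def C_def by simp_all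
  have "card (A \<union> B \<union> C) = card (A \<union> B) + card C" using d2 fA by (simp add: card_Un_disjoint)
  also have "\<dots> = card A + card B + card C" using d1 fA by (simp add: card_Un_disjoint)
  finally have "card (A \<union> B \<union> C) = 1 + m + (m - 1)" using cB cC by (simp add: A_def)
  moreover have "NonOne ?N = A \<union> B \<union> C" unfolding NonOne_def A_def B_def C_def ..
  ultimately show ?thesis by simp
qed

lemma NonOne_hd: "x \<in> NonOne (Suc (Suc m)) \<Longrightarrow> x ! 0 \<noteq> 1"
  unfolding NonOne_def by (auto simp: map_upt_0 gA_def gB_def gC_def simp del: upt_Suc)

lemma card_step: "card (F (Suc (Suc m)) [[3,2,1],[2,1,3,4]]) = card (F (Suc m) [[3,2,1],[2,1,3,4]]) + 1 + m + (m - 1)"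
proof -
  have inj: "inj_on (\<lambda>\<sigma>::nat list. 1 # map Suc \<sigma>) X" for X by (rule inj_onI) (simp add: inj_map_eq_map)
  have dis: "(\<lambda>\<sigma>. 1 # map Suc \<sigma>) ` F (Suc m) [[3,2,1],[2,1,3,4]] \<inter> NonOne (Suc (Suc m)) = {}"
    using NonOne_hd by fastforce
  have fN: "finite (NonOne (Suc (Suc m)))" unfolding NonOne_def by simp
  have "card (F (Suc (Suc m)) [[3,2,1],[2,1,3,4]]) = card ((\<lambda>\<sigma>. 1 # map Suc \<sigma>) ` F (Suc m) [[3,2,1],[2,1,3,4]]) + card (NonOne (Suc (Suc m)))"
    unfolding decomp by (rule card_Un_disjoint[OF finite_imageI[OF fin_P] fN dis])
  also have "\<dots> = card (F (Suc m) [[3,2,1],[2,1,3,4]]) + (1 + m + (m - 1))"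
    using card_image[OF inj] card_NonOne by simp
  finally show ?thesis by simp
qed

lemma card_formula: "int (card (F (Suc (Suc m)) [[3,2,1],[2,1,3,4]])) = int m ^ 2 + int m + 2"
proof (induct m)
  case 0
  have "card (F 1 [[3,2,1],[2,1,3,4]]) = 1"
    unfolding P1 P0 by simp
  then show ?case using card_step[of 0] by simp
next
  case (Suc m)
  then show ?case using card_step[of "Suc m"] by (simp add: power2_eq_square algebra_simps)
qed

theorem mainTheorem7:
  fixes n :: nat
  assumes "n \<ge> 2"
  shows "int (card (F n [[3,2,1],[2,1,3,4]])) = int n ^ 2 - 3 * int n + 4"
proof -
  obtain m where m: "n = Suc (Suc m)" using assms by (metis add_2_eq_Suc le_Suc_ex)
  show ?thesis unfolding m using card_formula[of m] by (simp add: power2_eq_square algebra_simps)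
qed

end
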